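(* Let $n\ge1$, $\mu>0$, let $B^1,\dots,B^n$ be independent standard Brownian motions, $G_{1,\mu}$ an independent Gamma process, and $\|I^n_\mu(t)\|=\big(\sum_{j=1}^n|B^j(G_{1,\mu}(t))|^2\big)^{1/2}$. Then for every $t>0$, $$\|I^n_\mu(t)\|\ \stackrel{d}{=}\ G_{2,n/2}\big(2\,G_{1,\mu}(t)\big)\ \stackrel{d}{=}\ G_{2,\mu}\big(2\,G_{1,n/2}(t)\big),$$ with independent processes in each composition.
   Context: For $\gamma>0,\mu>0$, $G_{\gamma,\mu}(t)$ is a positive process whose value at time $t$ has density $\gamma\,x^{\mu\gamma-1}e^{-x^{\gamma}/t}/(t^{\mu}\Gamma(\mu))$, $x>0$. Composition of independent processes: $X(Y(t))$ has density $\int_0^\infty f_X(x,s)f_Y(s,t)\,ds$. *)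

theory Defs
  imports "HOL-Probability.Probability"
begin

definition gamma_proc_density :: "real \<Rightarrow> real \<Rightarrow> real \<Rightarrow> real \<Rightarrow> real" where
  "gamma_proc_density \<gamma> \<mu> t x =
     (if 0 < x then \<gamma> * x powr (\<mu> * \<gamma> - 1) * exp (- (x powr \<gamma>) / t) / (t powr \<mu> * Gamma \<mu>)
      else 0)"

definition gamma_proc_law :: "real \<Rightarrow> real \<Rightarrow> real \<Rightarrow> real measure" where
  "gamma_proc_law \<gamma> \<mu> t = density lborel (\<lambda>x. ennreal (gamma_proc_density \<gamma> \<mu> t x))"

text \<open>Joint law of (B^1(s),...,B^n(s)) for n independent standard Brownian motions:
  independent N(0,s) coordinates (standard deviation sqrt s).\<close>
definition bm_vector_law :: "nat \<Rightarrow> real \<Rightarrow> (nat \<Rightarrow> real) measure" where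
  "bm_vector_law n s = PiM {..<n} (\<lambda>_. density lborel (normal_density 0 (sqrt s)))"

definition bm_norm_law :: "nat \<Rightarrow> real \<Rightarrow> real measure" where
  "bm_norm_law n s = distr (bm_vector_law n s) borel (\<lambda>\<omega>. sqrt (\<Sum>j<n. \<bar>\<omega> j\<bar>\<^sup>2))"

text \<open>Law of X(Y(t)) for independent X, Y: mix the law of X(s) over the law of Y(t).\<close>
definition compose_law :: "real measure \<Rightarrow> (real \<Rightarrow> real measure) \<Rightarrow> real measure" where
  "compose_law LY LX = bind LY LX"

end

theory Submission
  imports Defs
begin


lemma subst_pos:
  fixes f :: "real \<Rightarrow> ennreal" and \<phi> \<phi>' :: "real \<Rightarrow> real"
  assumes f[measurable]: "f \<in> borel_measurable borel"
    and deriv: "\<And>x. (\<phi> has_real_derivative \<phi>' x) (at x)"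
    and cont: "continuous_on UNIV \<phi>'"
    and nonneg: "\<And>x. 0 < x \<Longrightarrow> 0 \<le> \<phi>' x"
    and mono: "\<And>x y. 0 < x \<Longrightarrow> x < y \<Longrightarrow> \<phi> x < \<phi> y"
    and pos: "\<And>x. 0 < x \<Longrightarrow> 0 < \<phi> x"
    and surj: "\<And>y. 0 < y \<Longrightarrow> \<exists>x>0. \<phi> x = y"
  shows "(\<integral>\<^sup>+y. f y * indicator {0<..} y \<partial>lborel)
       = (\<integral>\<^sup>+x. f (\<phi> x) * ennreal (\<phi>' x) * indicator {0<..} x \<partial>lborel)"
proof -
  have contphi: "continuous_on UNIV \<phi>"
    using deriv by (meson DERIV_continuous continuous_at_imp_continuous_on)
  have [measurable]: "\<phi> \<in> borel_measurable borel" "\<phi>' \<in> borel_measurable borel"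
    using contphi cont by (auto intro: borel_measurable_continuous_onI)
  define lo where "lo m = 1 / (real m + 2)" for m :: nat
  define hi where "hi m = real m + 2" for m :: nat
  have lo_pos: "0 < lo m" for m unfolding lo_def by simp
  have lohi: "lo m < hi m" for m unfolding lo_def hi_def by (smt (verit) divide_le_eq_1 of_nat_0_le_iff)
  define a where "a m = (SOME x. x > 0 \<and> \<phi> x = lo m)" for m
  define b where "b m = (SOME x. x > 0 \<and> \<phi> x = hi m)" for m
  have a: "a m > 0 \<and> \<phi> (a m) = lo m" for m
    unfolding a_def by (rule someI_ex) (use surj lo_pos in auto)
  have b: "b m > 0 \<and> \<phi> (b m) = hi m" for m
    unfolding b_def by (rule someI_ex) (use surj lo_pos lohi in \<open>meson less_trans\<close>)
  have le_of: "x \<le> y" if "0 < x" "0 < y" "\<phi> x \<le> \<phi> y" for x y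
    using mono[of y x] that by force
  have ab: "a m < b m" for m
    using a[of m] b[of m] lohi[of m] mono le_of by (metis less_le)
  have step: "(\<integral>\<^sup>+y. f y * indicator {lo m..hi m} y \<partial>lborel)
      = (\<integral>\<^sup>+x. f (\<phi> x) * ennreal (\<phi>' x) * indicator {a m..b m} x \<partial>lborel)" for m
  proof -
    have "(\<integral>\<^sup>+y. f y * indicator {\<phi> (a m)..\<phi> (b m)} y \<partial>lborel)
      = (\<integral>\<^sup>+x. f (\<phi> x) * ennreal (\<phi>' x) * indicator {a m..b m} x \<partial>lborel)"
      apply (rule nn_integral_substitution_aux[OF f _ deriv])
      using cont a[of m] ab[of m] by (auto intro: continuous_on_subset nonneg)
    then show ?thesis using a b by simp
  qed
  have inc1: "incseq (\<lambda>m y. f y * indicator {lo m..hi m} y :: ennreal)"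
  proof -
    have *: "lo n \<le> lo m" "hi m \<le> hi n" if "m \<le> n" for m n
      using that unfolding lo_def hi_def by (auto intro!: divide_left_mono)
    show ?thesis unfolding incseq_def le_fun_def
    proof (intro allI impI)
      fix m n :: nat and x :: real assume "m \<le> n"
      then have "{lo m..hi m} \<subseteq> {lo n..hi n}" using *[of m n] by auto
      then show "f x * indicator {lo m..hi m} x \<le> f x * indicator {lo n..hi n} x"
        by (intro mult_left_mono) (auto simp: indicator_def)
    qed
  qed
  have amono: "a n \<le> a m" if "m \<le> n" for m n
    using le_of[of "a n" "a m"] a[of n] a[of m] that by (auto simp: lo_def field_simps)
  have bmono: "b m \<le> b n" if "m \<le> n" for m n
    using le_of[of "b m" "b n"] b[of n] b[of m] that by (auto simp: hi_def field_simps)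
  have inc2: "incseq (\<lambda>m x. f (\<phi> x) * ennreal (\<phi>' x) * indicator {a m..b m} x :: ennreal)"
    unfolding incseq_def le_fun_def
  proof (intro allI impI)
    fix m n :: nat and x :: real assume "m \<le> n"
    then have "{a m..b m} \<subseteq> {a n..b n}" using amono[of m n] bmono[of m n] by auto
    then show "f (\<phi> x) * ennreal (\<phi>' x) * indicator {a m..b m} x \<le> f (\<phi> x) * ennreal (\<phi>' x) * indicator {a n..b n} x"
      by (intro mult_left_mono) (auto simp: indicator_def)
  qed
  have sup1: "(SUP m. f y * indicator {lo m..hi m} y) = f y * indicator {0<..} y" for y
  proof (cases "0 < y")
    case True
    obtain m :: nat where m: "max y (1/y) < real m" using reals_Archimedean2 by blast
    have "y \<in> {lo m..hi m}"
      using m True by (auto simp: lo_def hi_def field_simps)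
    then have "f y \<le> (SUP m. f y * indicator {lo m..hi m} y)"
      by (metis (no_types, lifting) SUP_upper UNIV_I indicator_simps(1) mult.right_neutral)
    moreover have "(SUP m. f y * indicator {lo m..hi m} y) \<le> f y"
      by (intro SUP_least) (auto simp: indicator_def)
    ultimately show ?thesis using True by (auto intro: antisym)
  next
    case False
    then have "y \<notin> {lo m..hi m}" for m using lo_pos[of m] by auto
    then show ?thesis using False by simp
  qed
  have sup2: "(SUP m. f (\<phi> x) * ennreal (\<phi>' x) * indicator {a m..b m} x) = f (\<phi> x) * ennreal (\<phi>' x) * indicator {0<..} x" for x
  proof (cases "0 < x")
    case True
    obtain m :: nat where m: "max (\<phi> x) (1/\<phi> x) < real m" using reals_Archimedean2 by blast
    have px: "0 < \<phi> x" using pos True by auto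
    have "lo m \<le> \<phi> x" "\<phi> x \<le> hi m"
      using m px by (auto simp: lo_def hi_def field_simps)
    then have "x \<in> {a m..b m}"
      using le_of a b True by (metis atLeastAtMost_iff)
    then have "f (\<phi> x) * ennreal (\<phi>' x) \<le> (SUP m. f (\<phi> x) * ennreal (\<phi>' x) * indicator {a m..b m} x)"
      by (metis (no_types, lifting) SUP_upper UNIV_I indicator_simps(1) mult.right_neutral)
    moreover have "(SUP m. f (\<phi> x) * ennreal (\<phi>' x) * indicator {a m..b m} x) \<le> f (\<phi> x) * ennreal (\<phi>' x)"
      by (intro SUP_least) (auto simp: indicator_def)
    ultimately show ?thesis using True by (auto intro: antisym)
  next
    case False
    then have "x \<notin> {a m..b m}" for m using a[of m] by auto
    then show ?thesis using False by simp
  qed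
  have "(\<integral>\<^sup>+y. f y * indicator {0<..} y \<partial>lborel) = (\<integral>\<^sup>+y. (SUP m. f y * indicator {lo m..hi m} y) \<partial>lborel)"
    by (simp add: sup1)
  also have "\<dots> = (SUP m. \<integral>\<^sup>+y. f y * indicator {lo m..hi m} y \<partial>lborel)"
    by (rule nn_integral_monotone_convergence_SUP[OF inc1]) simp
  also have "\<dots> = (SUP m. \<integral>\<^sup>+x. f (\<phi> x) * ennreal (\<phi>' x) * indicator {a m..b m} x \<partial>lborel)"
    using step by simp
  also have "\<dots> = (\<integral>\<^sup>+x. (SUP m. f (\<phi> x) * ennreal (\<phi>' x) * indicator {a m..b m} x) \<partial>lborel)"
    by (rule nn_integral_monotone_convergence_SUP[OF inc2, symmetric]) simp
  also have "\<dots> = (\<integral>\<^sup>+x. f (\<phi> x) * ennreal (\<phi>' x) * indicator {0<..} x \<partial>lborel)"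
    by (simp add: sup2)
  finally show ?thesis .
qed



lemma gpd1: "gamma_proc_density 1 a T x = (if 0 < x then x powr (a - 1) * exp (- x / T) / (T powr a * Gamma a) else 0)"
  by (simp add: gamma_proc_density_def)

lemma gpd2: "gamma_proc_density 2 a T x = (if 0 < x then 2 * x powr (2 * a - 1) * exp (- (x\<^sup>2) / T) / (T powr a * Gamma a) else 0)"
  by (simp add: gamma_proc_density_def powr_numeral mult.commute)

lemma gpd_nonneg: "0 < a \<Longrightarrow> 0 \<le> T \<Longrightarrow> 0 \<le> \<gamma> \<Longrightarrow> 0 \<le> gamma_proc_density \<gamma> a T x"
  by (auto simp: gamma_proc_density_def intro!: divide_nonneg_pos mult_nonneg_nonneg Gamma_real_pos
      simp del: Gamma_real_pos)

lemma gpd_measurable[measurable]: "gamma_proc_density \<gamma> a T \<in> borel_measurable borel"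
  unfolding gamma_proc_density_def by measurable

lemma id1: fixes T u :: real assumes "0 < T" "0 < u" shows
  "(T * u) powr (a - 1) * exp (- (T * u) / T) / (T powr a * Gamma a) * T = u powr (a - 1) * exp (- u / 1) / (1 powr a * Gamma a)"
proof -
  have "T powr a = T powr (a - 1) * T" using assms powr_add[of T "a - 1" 1] by simp
  then show ?thesis using assms by (simp add: powr_mult field_simps)
qed

lemma id2: fixes T x :: real assumes "0 < T" "0 < x" shows
  "(x\<^sup>2 / T) powr (a - 1) * exp (- (x\<^sup>2 / T) / 1) / (1 powr a * Gamma a) * (2 * x / T)
   = 2 * x powr (2 * a - 1) * exp (- (x\<^sup>2) / T) / (T powr a * Gamma a)"
proof -
  have "T powr a = T powr (a - 1) * T" using assms powr_add[of T "a - 1" 1] by simp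
  moreover have "x powr (2 * a - 1) = (x\<^sup>2) powr (a - 1) * x"
  proof -
    have "x powr (2 * a - 1) = x powr (2 * (a - 1) + 1)" by (simp add: algebra_simps)
    also have "\<dots> = x powr (2 * (a - 1)) * x powr 1" by (rule powr_add)
    also have "x powr (2 * (a - 1)) = (x powr 2) powr (a - 1)" by (simp add: powr_powr)
    also have "x powr 2 = x\<^sup>2" using assms by (simp add: powr_numeral)
    finally show ?thesis using assms by simp
  qed
  ultimately show ?thesis using assms by (simp add: powr_divide field_simps)
qed

lemma scale_gamma1:
  fixes F :: "real \<Rightarrow> ennreal" assumes T: "0 < T" and a: "0 < a" and [measurable]: "F \<in> borel_measurable borel"
  shows "(\<integral>\<^sup>+s. ennreal (gamma_proc_density 1 a T s) * F s \<partial>lborel)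
       = (\<integral>\<^sup>+u. ennreal (gamma_proc_density 1 a 1 u) * F (T * u) \<partial>lborel)"
proof -
  have "(\<integral>\<^sup>+s. ennreal (gamma_proc_density 1 a T s) * F s \<partial>lborel)
      = (\<integral>\<^sup>+s. (ennreal (gamma_proc_density 1 a T s) * F s) * indicator {0<..} s \<partial>lborel)"
    by (intro nn_integral_cong) (auto simp: gpd1 indicator_def)
  also have "\<dots> = (\<integral>\<^sup>+u. (ennreal (gamma_proc_density 1 a T (T * u)) * F (T * u)) * ennreal T * indicator {0<..} u \<partial>lborel)"
  proof (rule subst_pos[where \<phi>="\<lambda>u. T * u" and \<phi>'="\<lambda>_. T"])
    show "\<exists>x>0. T * x = y" if "0 < y" for y
      using T that by (intro exI[of _ "y / T"]) auto
  qed (use T in \<open>auto intro!: derivative_eq_intros\<close>)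
  also have "\<dots> = (\<integral>\<^sup>+u. ennreal (gamma_proc_density 1 a 1 u) * F (T * u) \<partial>lborel)"
  proof (intro nn_integral_cong)
    fix u :: real
    show "ennreal (gamma_proc_density 1 a T (T * u)) * F (T * u) * ennreal T * indicator {0<..} u
        = ennreal (gamma_proc_density 1 a 1 u) * F (T * u)"
    proof (cases "0 < u")
      case True
      have "ennreal (gamma_proc_density 1 a T (T * u)) * ennreal T = ennreal (gamma_proc_density 1 a T (T * u) * T)"
        using T a by (simp add: ennreal_mult' gpd_nonneg)
      also have "gamma_proc_density 1 a T (T * u) * T = gamma_proc_density 1 a 1 u"
        using True T id1[OF T True, of a] by (simp add: gpd1)
      finally have e: "ennreal (gamma_proc_density 1 a T (T * u)) * ennreal T = ennreal (gamma_proc_density 1 a 1 u)" .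
      have "ennreal (gamma_proc_density 1 a T (T * u)) * F (T * u) * ennreal T * indicator {0<..} u
        = (ennreal (gamma_proc_density 1 a T (T * u)) * ennreal T) * F (T * u)" using True by (simp add: mult_ac)
      then show ?thesis by (simp only: e)
    qed (simp add: gpd1)
  qed
  finally show ?thesis .
qed

lemma gamma2_to_gamma1:
  fixes f :: "real \<Rightarrow> ennreal" assumes T: "0 < T" and a: "0 < a" and [measurable]: "f \<in> borel_measurable borel"
  shows "(\<integral>\<^sup>+x. ennreal (gamma_proc_density 2 a T x) * f x \<partial>lborel)
       = (\<integral>\<^sup>+y. ennreal (gamma_proc_density 1 a 1 y) * f (sqrt (T * y)) \<partial>lborel)"
proof -
  have "(\<integral>\<^sup>+y. ennreal (gamma_proc_density 1 a 1 y) * f (sqrt (T * y)) \<partial>lborel)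
      = (\<integral>\<^sup>+y. (ennreal (gamma_proc_density 1 a 1 y) * f (sqrt (T * y))) * indicator {0<..} y \<partial>lborel)"
    by (intro nn_integral_cong) (auto simp: gpd1 indicator_def)
  also have "\<dots> = (\<integral>\<^sup>+x. (ennreal (gamma_proc_density 1 a 1 (x\<^sup>2 / T)) * f (sqrt (T * (x\<^sup>2 / T)))) * ennreal (2 * x / T) * indicator {0<..} x \<partial>lborel)"
  proof (rule subst_pos[where \<phi>="\<lambda>x. x\<^sup>2 / T" and \<phi>'="\<lambda>x. 2 * x / T"])
    show "\<exists>x>0. x\<^sup>2 / T = y" if "0 < y" for y
      using T that by (intro exI[of _ "sqrt (T * y)"]) auto
    show "x\<^sup>2 / T < y\<^sup>2 / T" if "0 < x" "x < y" for x y
      using T that by (simp add: divide_strict_right_mono power_strict_mono)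
  qed (use T in \<open>auto intro!: derivative_eq_intros continuous_intros\<close>)
  also have "\<dots> = (\<integral>\<^sup>+x. ennreal (gamma_proc_density 2 a T x) * f x \<partial>lborel)"
  proof (intro nn_integral_cong)
    fix x :: real
    show "ennreal (gamma_proc_density 1 a 1 (x\<^sup>2 / T)) * f (sqrt (T * (x\<^sup>2 / T))) * ennreal (2 * x / T) * indicator {0<..} x
        = ennreal (gamma_proc_density 2 a T x) * f x"
    proof (cases "0 < x")
      case True
      have "ennreal (gamma_proc_density 1 a 1 (x\<^sup>2 / T)) * ennreal (2 * x / T) = ennreal (gamma_proc_density 1 a 1 (x\<^sup>2 / T) * (2 * x / T))"
        using T a True by (subst ennreal_mult[symmetric]) (auto simp: gpd_nonneg)
      also have "gamma_proc_density 1 a 1 (x\<^sup>2 / T) * (2 * x / T) = gamma_proc_density 2 a T x"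
        using True T id2[OF T True, of a] by (simp add: gpd1 gpd2)
      finally have e: "ennreal (gamma_proc_density 1 a 1 (x\<^sup>2 / T)) * ennreal (2 * x / T) = ennreal (gamma_proc_density 2 a T x)" .
      have "ennreal (gamma_proc_density 1 a 1 (x\<^sup>2 / T)) * f (sqrt (T * (x\<^sup>2 / T))) * ennreal (2 * x / T) * indicator {0<..} x
        = (ennreal (gamma_proc_density 1 a 1 (x\<^sup>2 / T)) * ennreal (2 * x / T)) * f x" using True T by (simp add: mult_ac)
      then show ?thesis by (simp only: e)
    qed (simp add: gpd2)
  qed
  finally show ?thesis by simp
qed



lemma gamma1_total: assumes a: "0 < a"
  shows "(\<integral>\<^sup>+y. ennreal (gamma_proc_density 1 a 1 y) \<partial>lborel) = 1"
proof -
  have "(\<integral>\<^sup>+y. ennreal (gamma_proc_density 1 a 1 y) \<partial>lborel)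
     = (\<integral>\<^sup>+y. ennreal (1 / Gamma a) * ennreal (indicator {0..} y * y powr (a - 1) / exp y) \<partial>lborel)"
  proof (intro nn_integral_cong)
    fix y :: real
    show "ennreal (gamma_proc_density 1 a 1 y) = ennreal (1 / Gamma a) * ennreal (indicator {0..} y * y powr (a - 1) / exp y)"
      using a Gamma_real_pos[OF a] by (subst ennreal_mult[symmetric]) (auto simp: gpd1 indicator_def exp_minus field_simps)
  qed
  also have "\<dots> = ennreal (1 / Gamma a) * ennreal (Gamma a)"
    using a by (subst nn_integral_cmult) (auto simp: Gamma_conv_nn_integral_real)
  also have "\<dots> = 1"
  proof -
    have "Gamma a \<noteq> 0" using Gamma_real_pos[OF a] by linarith
    then show ?thesis using a by (subst ennreal_mult[symmetric]) auto
  qed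
  finally show ?thesis .
qed

lemma gamma2_total: assumes a: "0 < a" and T: "0 < T"
  shows "(\<integral>\<^sup>+x. ennreal (gamma_proc_density 2 a T x) \<partial>lborel) = 1"
  using gamma2_to_gamma1[OF T a, of "\<lambda>_. 1"] gamma1_total[OF a] by simp

lemma normal_id: fixes v y :: real assumes v: "0 < v" and y: "0 < y"
  shows "gamma_proc_density 1 (1/2) (2 * v) (y\<^sup>2) * (2 * y) = 2 * normal_density 0 (sqrt v) y"
proof -
  have "(y\<^sup>2) powr (1/2 - 1) = 1 / y"
    using y by (simp add: powr_minus_divide powr_half_sqrt)
  moreover have "(2 * v) powr (1/2) = sqrt (2 * v)" using v by (simp add: powr_half_sqrt)
  moreover have "sqrt (2 * v) * sqrt pi = sqrt (2 * pi * v)" by (simp add: real_sqrt_mult)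
  ultimately show ?thesis using v y
    by (simp add: gpd1 normal_density_def Gamma_one_half_real field_simps)
qed

lemma normal_square:
  fixes g :: "real \<Rightarrow> ennreal" assumes v: "0 < v" and [measurable]: "g \<in> borel_measurable borel"
  shows "(\<integral>\<^sup>+y. ennreal (normal_density 0 (sqrt v) y) * g (y\<^sup>2) \<partial>lborel)
       = (\<integral>\<^sup>+w. ennreal (gamma_proc_density 1 (1/2) (2 * v) w) * g w \<partial>lborel)"
proof -
  define h where "h y = ennreal (normal_density 0 (sqrt v) y) * g (y\<^sup>2)" for y
  have hm[measurable]: "h \<in> borel_measurable borel" unfolding h_def by measurable
  have heven: "h (- y) = h y" for y by (simp add: h_def normal_density_def)
  have "(\<integral>\<^sup>+y. h y \<partial>lborel) = (\<integral>\<^sup>+y. h y * indicator {0<..} y + h y * indicator {..0} y \<partial>lborel)"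
    by (intro nn_integral_cong) (auto simp: indicator_def)
  also have "\<dots> = (\<integral>\<^sup>+y. h y * indicator {0<..} y \<partial>lborel) + (\<integral>\<^sup>+y. h y * indicator {..0} y \<partial>lborel)"
    by (rule nn_integral_add) auto
  also have "(\<integral>\<^sup>+y. h y * indicator {..0} y \<partial>lborel) = (\<integral>\<^sup>+y. h y * indicator {..0} y \<partial>distr lborel borel uminus)"
    by (simp add: lborel_distr_uminus)
  also have "\<dots> = (\<integral>\<^sup>+y. h (- y) * indicator {..0} (- y) \<partial>lborel)"
    by (subst nn_integral_distr) auto
  also have "\<dots> = (\<integral>\<^sup>+y. h y * indicator {0<..} y \<partial>lborel)"
  proof (rule nn_integral_cong_AE)
    show "AE y in lborel. h (- y) * indicator {..0} (- y) = h y * indicator {0<..} y"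
      using AE_lborel_singleton[of "0::real"] by eventually_elim (auto simp: heven indicator_def)
  qed
  also have "(\<integral>\<^sup>+y. h y * indicator {0<..} y \<partial>lborel) + (\<integral>\<^sup>+y. h y * indicator {0<..} y \<partial>lborel)
      = (\<integral>\<^sup>+y. 2 * (h y * indicator {0<..} y) \<partial>lborel)"
    by (subst nn_integral_cmult) (auto simp: mult_2)
  also have "\<dots> = (\<integral>\<^sup>+y. (ennreal (gamma_proc_density 1 (1/2) (2 * v) (y\<^sup>2)) * g (y\<^sup>2)) * ennreal (2 * y) * indicator {0<..} y \<partial>lborel)"
  proof (intro nn_integral_cong)
    fix y :: real
    show "2 * (h y * indicator {0<..} y) = ennreal (gamma_proc_density 1 (1/2) (2 * v) (y\<^sup>2)) * g (y\<^sup>2) * ennreal (2 * y) * indicator {0<..} y"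
    proof (cases "0 < y")
      case True
      have "ennreal (gamma_proc_density 1 (1/2) (2 * v) (y\<^sup>2)) * ennreal (2 * y)
          = ennreal (gamma_proc_density 1 (1/2) (2 * v) (y\<^sup>2) * (2 * y))"
        using True v by (subst ennreal_mult[symmetric]) (auto simp: gpd_nonneg)
      also have "\<dots> = ennreal (2 * normal_density 0 (sqrt v) y)"
        using normal_id[OF v True] by (simp only:)
      also have "\<dots> = 2 * ennreal (normal_density 0 (sqrt v) y)"
        by (simp add: ennreal_mult)
      finally have e: "ennreal (gamma_proc_density 1 (1/2) (2 * v) (y\<^sup>2)) * ennreal (2 * y) = 2 * ennreal (normal_density 0 (sqrt v) y)" .
      have "ennreal (gamma_proc_density 1 (1/2) (2 * v) (y\<^sup>2)) * g (y\<^sup>2) * ennreal (2 * y) * indicator {0<..} y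
          = (ennreal (gamma_proc_density 1 (1/2) (2 * v) (y\<^sup>2)) * ennreal (2 * y)) * g (y\<^sup>2)"
        using True by (simp add: mult_ac)
      then show ?thesis using True by (simp only: e) (simp add: h_def mult_ac)
    qed simp
  qed
  also have "\<dots> = (\<integral>\<^sup>+w. (ennreal (gamma_proc_density 1 (1/2) (2 * v) w) * g w) * indicator {0<..} w \<partial>lborel)"
  proof (rule subst_pos[where \<phi>="\<lambda>y. y\<^sup>2" and \<phi>'="\<lambda>y. 2 * y", symmetric])
    show "\<exists>x>0. x\<^sup>2 = y" if "0 < y" for y :: real
      using that by (intro exI[of _ "sqrt y"]) auto
    show "x\<^sup>2 < y\<^sup>2" if "0 < x" "x < y" for x y :: real
      using that by (simp add: power_strict_mono)
  qed (auto intro!: derivative_eq_intros continuous_intros)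
  also have "\<dots> = (\<integral>\<^sup>+w. ennreal (gamma_proc_density 1 (1/2) (2 * v) w) * g w \<partial>lborel)"
    by (intro nn_integral_cong) (auto simp: gpd1 indicator_def)
  finally show ?thesis by (simp add: h_def)
qed



lemma beta_nn: assumes "0 < a" "0 < b"
  shows "(\<integral>\<^sup>+r. ennreal (indicator {0..1} r * (r powr (a - 1) * (1 - r) powr (b - 1))) \<partial>lborel) = ennreal (Beta a b)"
  using nn_integral_has_integral_lebesgue[OF _ has_integral_Beta_real[OF assms]] by simp

lemma conv_pointwise:
  fixes a b T w u :: real
  assumes a: "0 < a" and b: "0 < b" and T: "0 < T" and w: "0 < w"
  shows "gamma_proc_density 1 a T u * gamma_proc_density 1 b T (w - u)
       = exp (- w / T) / (T powr a * Gamma a * (T powr b * Gamma b)) * (indicator {0..w} u * (u powr (a - 1) * (w - u) powr (b - 1)))"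
proof (cases "0 < u \<and> u < w")
  case True
  have "exp (- u / T) * exp (- (w - u) / T) = exp (- w / T)"
    using T by (simp add: exp_add[symmetric] field_simps)
  then show ?thesis using True by (simp add: gpd1 indicator_def field_simps)
next
  case False
  then show ?thesis by (auto simp: gpd1 indicator_def)
qed

lemma gamma_conv:
  fixes a b T w :: real
  assumes a: "0 < a" and b: "0 < b" and T: "0 < T"
  shows "(\<integral>\<^sup>+u. ennreal (gamma_proc_density 1 a T u) * ennreal (gamma_proc_density 1 b T (w - u)) \<partial>lborel)
       = ennreal (gamma_proc_density 1 (a + b) T w)"
proof (cases "0 < w")
  case False
  have z: "ennreal (gamma_proc_density 1 a T u) * ennreal (gamma_proc_density 1 b T (w - u)) = 0" for u
    using False by (auto simp: gpd1)
  have "(\<integral>\<^sup>+u. ennreal (gamma_proc_density 1 a T u) * ennreal (gamma_proc_density 1 b T (w - u)) \<partial>lborel) = (\<integral>\<^sup>+u. 0 \<partial>(lborel::real measure))"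
    by (intro nn_integral_cong) (simp only: z)
  then show ?thesis using False by (simp add: gpd1)
next
  case w: True
  define C where "C = exp (- w / T) / (T powr a * Gamma a * (T powr b * Gamma b))"
  have C: "0 \<le> C" using a b unfolding C_def by (auto intro!: divide_nonneg_pos)
  have "(\<integral>\<^sup>+u. ennreal (gamma_proc_density 1 a T u) * ennreal (gamma_proc_density 1 b T (w - u)) \<partial>lborel)
      = (\<integral>\<^sup>+u. ennreal C * ennreal (indicator {0..w} u * (u powr (a - 1) * (w - u) powr (b - 1))) \<partial>lborel)"
  proof (intro nn_integral_cong)
    fix u :: real
    show "ennreal (gamma_proc_density 1 a T u) * ennreal (gamma_proc_density 1 b T (w - u))
        = ennreal C * ennreal (indicator {0..w} u * (u powr (a - 1) * (w - u) powr (b - 1)))"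
      using conv_pointwise[OF a b T w, of u] a b T C
      by (simp add: ennreal_mult'[symmetric] gpd_nonneg C_def)
  qed
  also have "\<dots> = ennreal C * (\<integral>\<^sup>+u. ennreal ((u powr (a - 1) * (w - u) powr (b - 1)) * indicator {w * 0..w * 1} u) \<partial>lborel)"
    by (subst nn_integral_cmult) (auto simp: mult.commute)
  also have "(\<integral>\<^sup>+u. ennreal ((u powr (a - 1) * (w - u) powr (b - 1)) * indicator {w * 0..w * 1} u) \<partial>lborel)
      = (\<integral>\<^sup>+r. ennreal (((w * r) powr (a - 1) * (w - w * r) powr (b - 1)) * w * indicator {0..1} r) \<partial>lborel)"
    by (rule nn_integral_substitution[where g="\<lambda>r. w * r" and g'="\<lambda>_. w"])
       (use w in \<open>auto intro!: derivative_eq_intros simp: set_borel_measurable_def\<close>)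
  also have "\<dots> = (\<integral>\<^sup>+r. ennreal (w powr (a + b - 1)) * ennreal (indicator {0..1} r * (r powr (a - 1) * (1 - r) powr (b - 1))) \<partial>lborel)"
  proof (intro nn_integral_cong)
    fix r :: real
    show "ennreal (((w * r) powr (a - 1) * (w - w * r) powr (b - 1)) * w * indicator {0..1} r)
        = ennreal (w powr (a + b - 1)) * ennreal (indicator {0..1} r * (r powr (a - 1) * (1 - r) powr (b - 1)))"
    proof (cases "r \<in> {0..1}")
      case True
      have e1: "(w * r) powr (a - 1) = w powr (a - 1) * r powr (a - 1)" using w True by (simp add: powr_mult)
      have e2: "(w - w * r) powr (b - 1) = w powr (b - 1) * (1 - r) powr (b - 1)"
        using w True by (simp add: powr_mult[symmetric] right_diff_distrib)
      have e3: "w powr (a + b - 1) = w powr (a - 1) * w powr (b - 1) * w"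
        using w powr_add[of w "a - 1" "b - 1"] powr_add[of w "a - 1 + (b - 1)" 1] by (simp add: algebra_simps)
      have e4: "(w * r) powr (a - 1) * (w - w * r) powr (b - 1) * w = w powr (a + b - 1) * (r powr (a - 1) * (1 - r) powr (b - 1))"
        unfolding e1 e2 e3 by (simp add: mult_ac)
      have "ennreal (((w * r) powr (a - 1) * (w - w * r) powr (b - 1)) * w * indicator {0..1} r)
          = ennreal (w powr (a + b - 1) * (r powr (a - 1) * (1 - r) powr (b - 1)))"
        using True by (simp only: e4 indicator_simps mult_1_right)
      also have "\<dots> = ennreal (w powr (a + b - 1)) * ennreal (indicator {0..1} r * (r powr (a - 1) * (1 - r) powr (b - 1)))"
        using True by (subst ennreal_mult[symmetric]) auto
      finally show ?thesis .
    qed simp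
  qed
  also have "\<dots> = ennreal (w powr (a + b - 1)) * ennreal (Beta a b)"
    by (subst nn_integral_cmult) (auto simp: beta_nn[OF a b])
  also have "\<dots> = ennreal (w powr (a + b - 1) * Beta a b)"
    using a b by (subst ennreal_mult) (auto simp: Beta_def)
  also have "ennreal C * \<dots> = ennreal (C * (w powr (a + b - 1) * Beta a b))"
    using a b C by (subst (2) ennreal_mult) (auto simp: Beta_def)
  finally have "(\<integral>\<^sup>+u. ennreal (gamma_proc_density 1 a T u) * ennreal (gamma_proc_density 1 b T (w - u)) \<partial>lborel)
      = ennreal (C * (w powr (a + b - 1) * Beta a b))" .
  also have "C * (w powr (a + b - 1) * Beta a b) = gamma_proc_density 1 (a + b) T w"
  proof -
    have g: "Gamma a \<noteq> 0" "Gamma b \<noteq> 0" "Gamma (a + b) \<noteq> 0"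
      using Gamma_real_pos[OF a] Gamma_real_pos[OF b] Gamma_real_pos[OF add_pos_pos[OF a b]] by linarith+
    show ?thesis
      using w a b T g by (simp add: C_def Beta_def gpd1 powr_add field_simps)
  qed
  finally show ?thesis .
qed



lemma chisq:
  fixes n :: nat and v :: real
  assumes n: "1 \<le> n" and v: "0 < v"
  shows "\<forall>f. f \<in> borel_measurable borel \<longrightarrow>
    (\<integral>\<^sup>+\<omega>. f (\<Sum>j<n. (\<omega> j)\<^sup>2) \<partial>PiM {..<n} (\<lambda>_. density lborel (\<lambda>x. ennreal (normal_density 0 (sqrt v) x))))
      = (\<integral>\<^sup>+w. ennreal (gamma_proc_density 1 (real n / 2) (2 * v) w) * f w \<partial>lborel)"
  using n
proof (induction n rule: nat_induct_at_least)
  define N where "N = density lborel (\<lambda>x. ennreal (normal_density 0 (sqrt v) x))"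
  have probN: "prob_space N" unfolding N_def using v by (intro prob_space_normal_density) simp
  interpret P: product_sigma_finite "\<lambda>_::nat. N"
    unfolding product_sigma_finite_def using probN
    by (simp add: prob_space_imp_sigma_finite)
  case base
  show ?case
  proof (intro allI impI)
    fix f :: "real \<Rightarrow> ennreal" assume f[measurable]: "f \<in> borel_measurable borel"
    have "(\<integral>\<^sup>+\<omega>. f (\<Sum>j<1::nat. (\<omega> j)\<^sup>2) \<partial>PiM {..<1::nat} (\<lambda>_. N)) = (\<integral>\<^sup>+\<omega>. f ((\<omega> 0)\<^sup>2) \<partial>PiM {0::nat} (\<lambda>_. N))"
    proof -
      have e1: "{..<1::nat} = {0}" by auto
      show ?thesis unfolding e1 by simp
    qed
    also have "\<dots> = (\<integral>\<^sup>+y. f (y\<^sup>2) \<partial>N)"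
      by (rule P.product_nn_integral_singleton) (simp add: N_def)
    also have "\<dots> = (\<integral>\<^sup>+y. ennreal (normal_density 0 (sqrt v) y) * f (y\<^sup>2) \<partial>lborel)"
      unfolding N_def by (subst nn_integral_density) auto
    also have "\<dots> = (\<integral>\<^sup>+w. ennreal (gamma_proc_density 1 (1/2) (2 * v) w) * f w \<partial>lborel)"
      by (rule normal_square[OF v]) simp
    finally show "(\<integral>\<^sup>+\<omega>. f (\<Sum>j<1::nat. (\<omega> j)\<^sup>2) \<partial>PiM {..<1::nat} (\<lambda>_. density lborel (\<lambda>x. ennreal (normal_density 0 (sqrt v) x))))
      = (\<integral>\<^sup>+w. ennreal (gamma_proc_density 1 (real (1::nat) / 2) (2 * v) w) * f w \<partial>lborel)"
      by (simp add: N_def)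
  qed
next
  define N where "N = density lborel (\<lambda>x. ennreal (normal_density 0 (sqrt v) x))"
  have probN: "prob_space N" unfolding N_def using v by (intro prob_space_normal_density) simp
  interpret P: product_sigma_finite "\<lambda>_::nat. N"
    unfolding product_sigma_finite_def using probN
    by (simp add: prob_space_imp_sigma_finite)
  interpret N: prob_space N by (rule probN)
  have sN[simp, measurable_cong]: "sets N = sets borel" by (simp add: N_def)
  case (Suc n)
  have n2: "0 < real n / 2" using Suc.hyps by simp
  show ?case
  proof (intro allI impI)
    fix f :: "real \<Rightarrow> ennreal" assume f[measurable]: "f \<in> borel_measurable borel"
    define F where "F u = (\<integral>\<^sup>+w. ennreal (gamma_proc_density 1 (1/2) (2 * v) w) * f (u + w) \<partial>lborel)" for u
    have Fm[measurable]: "F \<in> borel_measurable borel" unfolding F_def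
      by measurable
    have F: "F u = (\<integral>\<^sup>+w. ennreal (gamma_proc_density 1 (1/2) (2 * v) w) * f (u + w) \<partial>lborel)" for u
      unfolding F_def ..
    have FN: "(\<integral>\<^sup>+y. f (u + y\<^sup>2) \<partial>N) = F u" for u
      unfolding F_def N_def by (subst nn_integral_density) (auto intro!: normal_square[OF v])
    have "(\<integral>\<^sup>+\<omega>. f (\<Sum>j<Suc n. (\<omega> j)\<^sup>2) \<partial>PiM {..<Suc n} (\<lambda>_. N))
        = (\<integral>\<^sup>+\<omega>. f (\<Sum>j<Suc n. (\<omega> j)\<^sup>2) \<partial>PiM (insert n {..<n}) (\<lambda>_. N))"
      by (simp add: lessThan_Suc)
    also have "\<dots> = (\<integral>\<^sup>+x. (\<integral>\<^sup>+y. f (\<Sum>j<Suc n. ((x(n := y)) j)\<^sup>2) \<partial>N) \<partial>PiM {..<n} (\<lambda>_. N))"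
      by (rule P.product_nn_integral_insert) (simp, simp, measurable, auto)
    also have "\<dots> = (\<integral>\<^sup>+x. F (\<Sum>j<n. (x j)\<^sup>2) \<partial>PiM {..<n} (\<lambda>_. N))"
      by (intro nn_integral_cong) (simp add: FN[symmetric])
    also have "\<dots> = (\<integral>\<^sup>+u. ennreal (gamma_proc_density 1 (real n / 2) (2 * v) u) * F u \<partial>lborel)"
      using Suc.IH Fm by (simp add: N_def)
    also have "\<dots> = (\<integral>\<^sup>+u. (\<integral>\<^sup>+z. ennreal (gamma_proc_density 1 (real n / 2) (2 * v) u) * ennreal (gamma_proc_density 1 (1/2) (2 * v) (z - u)) * f z \<partial>lborel) \<partial>lborel)"
    proof (intro nn_integral_cong)
      fix u :: real
      have "ennreal (gamma_proc_density 1 (real n / 2) (2 * v) u) * F u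
        = (\<integral>\<^sup>+w. ennreal (gamma_proc_density 1 (real n / 2) (2 * v) u) * (ennreal (gamma_proc_density 1 (1/2) (2 * v) w) * f (u + w)) \<partial>lborel)"
        unfolding F by (subst nn_integral_cmult) auto
      also have "\<dots> = (\<integral>\<^sup>+z. ennreal (gamma_proc_density 1 (real n / 2) (2 * v) u) * ennreal (gamma_proc_density 1 (1/2) (2 * v) (z - u)) * f z \<partial>lborel)"
        by (subst nn_integral_real_affine[where c=1 and t=u]) (auto simp: mult.assoc)
      finally show "ennreal (gamma_proc_density 1 (real n / 2) (2 * v) u) * F u
        = (\<integral>\<^sup>+z. ennreal (gamma_proc_density 1 (real n / 2) (2 * v) u) * ennreal (gamma_proc_density 1 (1/2) (2 * v) (z - u)) * f z \<partial>lborel)" .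
    qed
    also have "\<dots> = (\<integral>\<^sup>+z. (\<integral>\<^sup>+u. ennreal (gamma_proc_density 1 (real n / 2) (2 * v) u) * ennreal (gamma_proc_density 1 (1/2) (2 * v) (z - u)) * f z \<partial>lborel) \<partial>lborel)"
      by (rule lborel_pair.Fubini'[symmetric]) measurable
    also have "\<dots> = (\<integral>\<^sup>+z. ennreal (gamma_proc_density 1 (real (Suc n) / 2) (2 * v) z) * f z \<partial>lborel)"
    proof (intro nn_integral_cong)
      fix z :: real
      have "(\<integral>\<^sup>+u. ennreal (gamma_proc_density 1 (real n / 2) (2 * v) u) * ennreal (gamma_proc_density 1 (1/2) (2 * v) (z - u)) * f z \<partial>lborel)
          = (\<integral>\<^sup>+u. ennreal (gamma_proc_density 1 (real n / 2) (2 * v) u) * ennreal (gamma_proc_density 1 (1/2) (2 * v) (z - u)) \<partial>lborel) * f z"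
        by (subst nn_integral_multc) auto
      also have "\<dots> = ennreal (gamma_proc_density 1 (real n / 2 + 1/2) (2 * v) z) * f z"
        using gamma_conv[OF n2, of "1/2" "2 * v" z] v by simp
      also have "real n / 2 + 1/2 = real (Suc n) / 2" by (simp add: field_simps)
      finally show "(\<integral>\<^sup>+u. ennreal (gamma_proc_density 1 (real n / 2) (2 * v) u) * ennreal (gamma_proc_density 1 (1/2) (2 * v) (z - u)) * f z \<partial>lborel)
          = ennreal (gamma_proc_density 1 (real (Suc n) / 2) (2 * v) z) * f z" .
    qed
    finally show "(\<integral>\<^sup>+\<omega>. f (\<Sum>j<Suc n. (\<omega> j)\<^sup>2) \<partial>PiM {..<Suc n} (\<lambda>_. density lborel (\<lambda>x. ennreal (normal_density 0 (sqrt v) x))))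
      = (\<integral>\<^sup>+w. ennreal (gamma_proc_density 1 (real (Suc n) / 2) (2 * v) w) * f w \<partial>lborel)"
      by (simp add: N_def)
  qed
qed



lemma sqrt_sq_abs: "(sqrt s)\<^sup>2 = \<bar>s\<bar>"
proof (cases "0 \<le> s")
  case False
  then have "sqrt s = - sqrt (- s)" by (simp add: real_sqrt_minus)
  then show ?thesis using False by simp
qed simp

lemma normal_sqrt_abs: "normal_density 0 (sqrt s) = normal_density 0 (sqrt \<bar>s\<bar>)"
  by (rule ext) (simp add: normal_density_def sqrt_sq_abs)

lemma bm_norm_law_pos:
  assumes n: "1 \<le> n" and s: "s \<noteq> 0"
  shows "bm_norm_law n s = gamma_proc_law 2 (real n / 2) (2 * \<bar>s\<bar>)"
proof (rule measure_eqI)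
  define v where "v = \<bar>s\<bar>"
  have v: "0 < v" using s by (simp add: v_def)
  define P where "P = PiM {..<n} (\<lambda>_. density lborel (\<lambda>x. ennreal (normal_density 0 (sqrt v) x)))"
  have BV: "bm_vector_law n s = P"
    unfolding bm_vector_law_def P_def v_def by (simp add: normal_sqrt_abs[of s])
  have n2: "0 < real n / 2" using n by simp
  show "sets (bm_norm_law n s) = sets (gamma_proc_law 2 (real n / 2) (2 * \<bar>s\<bar>))"
    by (simp add: bm_norm_law_def gamma_proc_law_def)
  fix A assume "A \<in> sets (bm_norm_law n s)"
  then have A[measurable]: "A \<in> sets borel" by (simp add: bm_norm_law_def)
  have gm[measurable]: "(\<lambda>\<omega>. sqrt (\<Sum>j<n. \<bar>\<omega> j\<bar>\<^sup>2)) \<in> borel_measurable P"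
    unfolding P_def by measurable
  have gm2[measurable]: "(\<lambda>\<omega>. sqrt (\<Sum>j<n. (\<omega> j)\<^sup>2)) \<in> borel_measurable P"
    unfolding P_def by measurable
  have "emeasure (bm_norm_law n s) A = emeasure P ((\<lambda>\<omega>. sqrt (\<Sum>j<n. \<bar>\<omega> j\<bar>\<^sup>2)) -` A \<inter> space P)"
    unfolding bm_norm_law_def BV by (rule emeasure_distr) (auto simp: gm)
  also have "\<dots> = (\<integral>\<^sup>+\<omega>. indicator ((\<lambda>\<omega>. sqrt (\<Sum>j<n. \<bar>\<omega> j\<bar>\<^sup>2)) -` A \<inter> space P) \<omega> \<partial>P)"
    by (rule nn_integral_indicator[symmetric]) (rule measurable_sets[OF gm A])
  also have "\<dots> = (\<integral>\<^sup>+\<omega>. indicator A (sqrt (\<Sum>j<n. (\<omega> j)\<^sup>2)) \<partial>P)"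
    by (intro nn_integral_cong) (auto simp: indicator_def)
  also have "\<dots> = (\<integral>\<^sup>+w. ennreal (gamma_proc_density 1 (real n / 2) (2 * v) w) * indicator A (sqrt w) \<partial>lborel)"
    unfolding P_def
    by (rule chisq[OF n v, rule_format, of "\<lambda>w. indicator A (sqrt w)"]) measurable
  also have "\<dots> = (\<integral>\<^sup>+u. ennreal (gamma_proc_density 1 (real n / 2) 1 u) * indicator A (sqrt (2 * v * u)) \<partial>lborel)"
    by (rule scale_gamma1) (use v n2 in auto)
  also have "\<dots> = (\<integral>\<^sup>+x. ennreal (gamma_proc_density 2 (real n / 2) (2 * v) x) * indicator A x \<partial>lborel)"
    by (rule gamma2_to_gamma1[symmetric]) (use v n2 in auto)
  also have "\<dots> = emeasure (gamma_proc_law 2 (real n / 2) (2 * \<bar>s\<bar>)) A"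
    unfolding gamma_proc_law_def v_def by (subst emeasure_density) auto
  finally show "emeasure (bm_norm_law n s) A = emeasure (gamma_proc_law 2 (real n / 2) (2 * \<bar>s\<bar>)) A" .
qed

lemma bm_norm_law_zero:
  assumes n: "1 \<le> n"
  shows "bm_norm_law n 0 = gamma_proc_law 2 (real n / 2) (2 * \<bar>0\<bar>)"
proof (rule measure_eqI)
  define Z :: "real measure" where "Z = density lborel (\<lambda>x. ennreal (normal_density 0 (sqrt 0) x))"
  have Z0: "Z = density lborel (\<lambda>_. 0)" unfolding Z_def by (simp add: normal_density_def)
  have finZ: "finite_measure Z" unfolding Z0 by (rule finite_measureI) (simp add: emeasure_density)
  interpret P: product_sigma_finite "\<lambda>_::nat. Z"
    unfolding product_sigma_finite_def using finZ
    by (simp add: finite_measure.sigma_finite_measure)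
  have "emeasure (PiM {..<n} (\<lambda>_. Z)) (space (PiM {..<n} (\<lambda>_. Z))) = (\<Prod>i<n. emeasure Z (space Z))"
    unfolding space_PiM by (rule P.emeasure_PiM) auto
  also have "\<dots> = 0" using n unfolding Z0
    by (cases n) (auto simp: emeasure_density)
  finally have P0: "emeasure (PiM {..<n} (\<lambda>_. Z)) (space (PiM {..<n} (\<lambda>_. Z))) = 0" .
  show "sets (bm_norm_law n 0) = sets (gamma_proc_law 2 (real n / 2) (2 * \<bar>0\<bar>))"
    by (simp add: bm_norm_law_def gamma_proc_law_def)
  fix A assume "A \<in> sets (bm_norm_law n 0)"
  then have A[measurable]: "A \<in> sets borel" by (simp add: bm_norm_law_def)
  have "emeasure (bm_norm_law n 0) A \<le> emeasure (PiM {..<n} (\<lambda>_. Z)) (space (PiM {..<n} (\<lambda>_. Z)))"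
    unfolding bm_norm_law_def bm_vector_law_def Z_def[symmetric]
    by (subst emeasure_distr) (auto intro!: emeasure_mono simp: Z0)
  then have "emeasure (bm_norm_law n 0) A = 0" using P0 by simp
  moreover have "emeasure (gamma_proc_law 2 (real n / 2) (2 * \<bar>0\<bar>)) A = 0"
  proof -
    have z: "gamma_proc_density 2 (real n / 2) (2 * \<bar>0\<bar>) x = 0" for x
      by (simp add: gamma_proc_density_def)
    show ?thesis unfolding gamma_proc_law_def z by (simp add: emeasure_density)
  qed
  ultimately show "emeasure (bm_norm_law n 0) A = emeasure (gamma_proc_law 2 (real n / 2) (2 * \<bar>0\<bar>)) A" by simp
qed

lemma bm_norm_law_eq:
  assumes n: "1 \<le> n"
  shows "bm_norm_law n = (\<lambda>s. gamma_proc_law 2 (real n / 2) (2 * \<bar>s\<bar>))"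
proof
  fix s :: real show "bm_norm_law n s = gamma_proc_law 2 (real n / 2) (2 * \<bar>s\<bar>)"
    using bm_norm_law_pos[OF n, of s] bm_norm_law_zero[OF n] by (cases "s = 0") auto
qed



lemma gamma2_law_neg_not_subprob:
  assumes a: "0 < a" and s: "s < 0"
  shows "\<not> subprob_space (gamma_proc_law 2 a (2 * s))"
proof
  assume sp: "subprob_space (gamma_proc_law 2 a (2 * s))"
  define D where "D = (2 * s) powr a * Gamma a"
  have D: "0 < D" unfolding D_def using s a by (simp add: powr_gt_zero)
  define c where "c = 1 / (\<bar>s\<bar> * D)"
  have c: "0 < c" unfolding c_def using s D by (intro divide_pos_pos mult_pos_pos) auto
  define R where "R = 2 + 1 / c"
  have lb: "c \<le> gamma_proc_density 2 a (2 * s) x" if x: "1 \<le> x" for x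
  proof -
    have x0: "0 < x" using x by simp
    have "x\<^sup>2 / (2 * \<bar>s\<bar>) \<le> exp (x\<^sup>2 / (2 * \<bar>s\<bar>))"
      using exp_ge_add_one_self[of "x\<^sup>2 / (2 * \<bar>s\<bar>)"] by linarith
    moreover have "- (x\<^sup>2) / (2 * s) = x\<^sup>2 / (2 * \<bar>s\<bar>)" using s by simp
    ultimately have e: "x\<^sup>2 / (2 * \<bar>s\<bar>) \<le> exp (- (x\<^sup>2) / (2 * s))" by simp
    have p: "x powr (2 * a - 1) * x\<^sup>2 = x powr (2 * a + 1)"
      using x0 powr_add[of x "2 * a - 1" 2] by (simp add: powr_numeral algebra_simps)
    have p1: "1 \<le> x powr (2 * a + 1)" using x a by (intro ge_one_powr_ge_zero) auto
    have q1: "x powr (2 * a - 1) * (x\<^sup>2 / (2 * \<bar>s\<bar>)) = x powr (2 * a + 1) / (2 * \<bar>s\<bar>)"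
      by (metis p times_divide_eq_right)
    have "1 / (2 * \<bar>s\<bar>) \<le> x powr (2 * a + 1) / (2 * \<bar>s\<bar>)"
      by (rule divide_right_mono[OF p1]) simp
    then have "1 / (2 * \<bar>s\<bar>) \<le> x powr (2 * a - 1) * (x\<^sup>2 / (2 * \<bar>s\<bar>))"
      by (simp only: q1)
    also have "\<dots> \<le> x powr (2 * a - 1) * exp (- (x\<^sup>2) / (2 * s))"
      using e x0 by (intro mult_left_mono) auto
    finally have "1 / (2 * \<bar>s\<bar>) \<le> x powr (2 * a - 1) * exp (- (x\<^sup>2) / (2 * s))" .
    then have "2 * (1 / (2 * \<bar>s\<bar>)) / D \<le> 2 * (x powr (2 * a - 1) * exp (- (x\<^sup>2) / (2 * s))) / D"
      using D by (intro divide_right_mono) auto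
    then show ?thesis using x0 s unfolding c_def D_def by (simp add: gpd2 field_simps)
  qed
  have "ennreal (c * (R - 1)) = (\<integral>\<^sup>+x. ennreal c * indicator {1..R} x \<partial>lborel)"
    using c by (subst nn_integral_cmult) (auto simp: R_def ennreal_mult)
  also have "\<dots> \<le> (\<integral>\<^sup>+x. ennreal (gamma_proc_density 2 a (2 * s) x) * indicator {1..R} x \<partial>lborel)"
    using lb by (intro nn_integral_mono) (auto simp: indicator_def intro!: ennreal_leI)
  also have "\<dots> = emeasure (gamma_proc_law 2 a (2 * s)) {1..R}"
    unfolding gamma_proc_law_def by (subst emeasure_density) auto
  also have "\<dots> \<le> 1" using sp by (rule subprob_space.subprob_emeasure_le_1)
  finally have "c * (R - 1) \<le> 1" by (simp add: ennreal_le_1)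
  moreover have "c * (R - 1) = c + 1" using c by (simp add: R_def field_simps)
  ultimately show False using c by simp
qed

lemma gamma2_law_abs_subprob:
  assumes a: "0 < a"
  shows "subprob_space (gamma_proc_law 2 a (2 * \<bar>s\<bar>))"
proof (cases "s = 0")
  case True
  have z: "gamma_proc_density 2 a (2 * \<bar>s\<bar>) x = 0" for x using True
    by (simp add: gamma_proc_density_def)
  show ?thesis unfolding gamma_proc_law_def z
    by (rule subprob_spaceI) (auto simp: emeasure_density)
next
  case False
  have "emeasure (gamma_proc_law 2 a (2 * \<bar>s\<bar>)) (space (gamma_proc_law 2 a (2 * \<bar>s\<bar>))) = 1"
    unfolding gamma_proc_law_def using gamma2_total[OF a, of "2 * \<bar>s\<bar>"] False
    by (subst emeasure_density) auto
  then have "prob_space (gamma_proc_law 2 a (2 * \<bar>s\<bar>))" by (rule prob_spaceI)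
  then show ?thesis by (rule prob_space_imp_subprob_space)
qed

lemma kernel_meas:
  assumes a: "0 < a" and M: "sets M = sets borel"
  shows "(\<lambda>s. gamma_proc_law 2 a (2 * \<bar>s\<bar>)) \<in> measurable M (subprob_algebra borel)"
proof (rule measurable_subprob_algebra)
  show "subprob_space (gamma_proc_law 2 a (2 * \<bar>s\<bar>))" for s by (rule gamma2_law_abs_subprob[OF a])
  show "sets (gamma_proc_law 2 a (2 * \<bar>s\<bar>)) = sets borel" for s by (simp add: gamma_proc_law_def)
  fix A :: "real set" assume A[measurable]: "A \<in> sets borel"
  have "(\<lambda>s. \<integral>\<^sup>+x. ennreal (gamma_proc_density 2 a (2 * \<bar>s\<bar>) x) * indicator A x \<partial>lborel) \<in> borel_measurable borel"
    unfolding gamma_proc_density_def by measurable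
  then have "(\<lambda>s. \<integral>\<^sup>+x. ennreal (gamma_proc_density 2 a (2 * \<bar>s\<bar>) x) * indicator A x \<partial>lborel) \<in> borel_measurable M"
    unfolding measurable_cong_sets[OF M refl] .
  then show "(\<lambda>s. emeasure (gamma_proc_law 2 a (2 * \<bar>s\<bar>)) A) \<in> borel_measurable M"
    unfolding gamma_proc_law_def by (subst emeasure_density) auto
qed



lemma gamma1_law_sets[simp]: "sets (gamma_proc_law 1 c t) = sets borel"
  by (simp add: gamma_proc_law_def)

lemma gamma1_law_space[simp]: "space (gamma_proc_law 1 c t) = UNIV"
  by (simp add: gamma_proc_law_def)

lemma gamma1_AE_pos: "AE s in gamma_proc_law 1 c t. 0 < s"
  unfolding gamma_proc_law_def
  by (subst AE_density) (auto simp: gamma_proc_density_def)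

lemma bind_junk:
  assumes a: "0 < a"
  shows "bind (gamma_proc_law 1 c t) (\<lambda>s. gamma_proc_law 2 a (2 * s))
       = bind (gamma_proc_law 1 c t) (\<lambda>s. gamma_proc_law 2 a (2 * \<bar>s\<bar>))"
proof -
  define M where "M = gamma_proc_law 1 c t"
  define K where "K s = gamma_proc_law 2 a (2 * s)" for s
  define K' where "K' s = gamma_proc_law 2 a (2 * \<bar>s\<bar>)" for s
  define S where "S = subprob_algebra (borel :: real measure)"
  have Km: "K' \<in> measurable M S" unfolding K'_def S_def M_def
    by (rule kernel_meas[OF a]) simp
  have SK: "subprob_algebra (K x) = S" "subprob_algebra (K' x) = S" for x
    unfolding S_def K_def K'_def by (auto intro!: subprob_algebra_cong simp: gamma_proc_law_def)
  have "distr M S K = distr M S K'"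
    unfolding distr_def
  proof (rule measure_of_eq)
    show "sets S \<subseteq> Pow (space S)" by (rule sets.space_closed)
    fix X assume "X \<in> sigma_sets (space S) (sets S)"
    then have X: "X \<in> sets S" by (simp add: sets.sigma_sets_eq)
    define B where "B = K' -` X \<inter> space M"
    have B: "B \<in> sets M" unfolding B_def by (rule measurable_sets[OF Km X])
    have XS: "X \<subseteq> space S" using X by (rule sets.sets_into_space)
    have eq: "K -` X \<inter> space M = B \<inter> {0..}"
    proof (intro set_eqI iffI)
      fix x assume x: "x \<in> K -` X \<inter> space M"
      then have "K x \<in> space S" using XS by auto
      then have sp: "subprob_space (K x)" by (simp add: S_def space_subprob_algebra)
      have "0 \<le> x"
      proof (rule ccontr)
        assume "\<not> 0 \<le> x"
        then show False using gamma2_law_neg_not_subprob[OF a, of x] sp by (simp add: K_def)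
      qed
      then show "x \<in> B \<inter> {0..}" using x by (simp add: B_def K_def K'_def)
    next
      fix x assume "x \<in> B \<inter> {0..}"
      then have "K' x \<in> X" "0 \<le> x" by (auto simp: B_def)
      then show "x \<in> K -` X \<inter> space M" by (simp add: K_def K'_def M_def)
    qed
    have "emeasure M (B \<inter> {0..}) = emeasure M B"
    proof (rule emeasure_eq_AE)
      show "AE x in M. (x \<in> B \<inter> {0..}) = (x \<in> B)"
        using gamma1_AE_pos[of c t] unfolding M_def by eventually_elim auto
    qed (use B in \<open>auto simp: M_def\<close>)
    then show "emeasure M (K -` X \<inter> space M) = emeasure M (K' -` X \<inter> space M)"
      unfolding eq by (simp add: B_def)
  qed
  moreover have "bind M K = join (distr M S K)"
    by (simp add: bind_nonempty SK(1) M_def)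
  moreover have "bind M K' = join (distr M S K')"
    by (simp add: bind_nonempty SK(2) M_def)
  ultimately have "bind M K = bind M K'" by simp
  then show ?thesis unfolding M_def K_def K'_def .
qed

lemma mix_formula:
  assumes c: "0 < c" and b: "0 < b" and t: "0 < t" and A[measurable]: "A \<in> sets borel"
  shows "emeasure (bind (gamma_proc_law 1 c t) (\<lambda>s. gamma_proc_law 2 b (2 * \<bar>s\<bar>))) A
       = (\<integral>\<^sup>+u. \<integral>\<^sup>+y. ennreal (gamma_proc_density 1 c 1 u) * ennreal (gamma_proc_density 1 b 1 y) * indicator A (sqrt (2 * t * u * y)) \<partial>lborel \<partial>lborel)"
proof -
  have Km: "(\<lambda>s. gamma_proc_law 2 b (2 * \<bar>s\<bar>)) \<in> measurable borel (subprob_algebra borel)"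
    by (rule kernel_meas[OF b]) simp
  have Em[measurable]: "(\<lambda>s. emeasure (gamma_proc_law 2 b (2 * \<bar>s\<bar>)) A) \<in> borel_measurable borel"
    using Km A by (rule measurable_emeasure_kernel)
  have "emeasure (bind (gamma_proc_law 1 c t) (\<lambda>s. gamma_proc_law 2 b (2 * \<bar>s\<bar>))) A
      = (\<integral>\<^sup>+s. emeasure (gamma_proc_law 2 b (2 * \<bar>s\<bar>)) A \<partial>gamma_proc_law 1 c t)"
    by (rule emeasure_bind[where N=borel]) (auto intro!: kernel_meas[OF b])
  also have "\<dots> = (\<integral>\<^sup>+s. ennreal (gamma_proc_density 1 c t s) * emeasure (gamma_proc_law 2 b (2 * \<bar>s\<bar>)) A \<partial>lborel)"
    unfolding gamma_proc_law_def[of 1 c t] by (subst nn_integral_density) (simp_all add: Em)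
  also have "\<dots> = (\<integral>\<^sup>+u. ennreal (gamma_proc_density 1 c 1 u) * emeasure (gamma_proc_law 2 b (2 * \<bar>t * u\<bar>)) A \<partial>lborel)"
    by (rule scale_gamma1[OF t c]) simp
  also have "\<dots> = (\<integral>\<^sup>+u. \<integral>\<^sup>+y. ennreal (gamma_proc_density 1 c 1 u) * ennreal (gamma_proc_density 1 b 1 y) * indicator A (sqrt (2 * t * u * y)) \<partial>lborel \<partial>lborel)"
  proof (intro nn_integral_cong)
    fix u :: real
    show "ennreal (gamma_proc_density 1 c 1 u) * emeasure (gamma_proc_law 2 b (2 * \<bar>t * u\<bar>)) A
        = (\<integral>\<^sup>+y. ennreal (gamma_proc_density 1 c 1 u) * ennreal (gamma_proc_density 1 b 1 y) * indicator A (sqrt (2 * t * u * y)) \<partial>lborel)"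
    proof (cases "0 < u")
      case True
      have "emeasure (gamma_proc_law 2 b (2 * \<bar>t * u\<bar>)) A
          = (\<integral>\<^sup>+x. ennreal (gamma_proc_density 2 b (2 * (t * u)) x) * indicator A x \<partial>lborel)"
        unfolding gamma_proc_law_def using True t by (subst emeasure_density) auto
      also have "\<dots> = (\<integral>\<^sup>+y. ennreal (gamma_proc_density 1 b 1 y) * indicator A (sqrt (2 * (t * u) * y)) \<partial>lborel)"
        by (rule gamma2_to_gamma1) (use True t b in auto)
      finally have e: "emeasure (gamma_proc_law 2 b (2 * \<bar>t * u\<bar>)) A
          = (\<integral>\<^sup>+y. ennreal (gamma_proc_density 1 b 1 y) * indicator A (sqrt (2 * (t * u) * y)) \<partial>lborel)" .
      have "ennreal (gamma_proc_density 1 c 1 u) * (\<integral>\<^sup>+y. ennreal (gamma_proc_density 1 b 1 y) * indicator A (sqrt (2 * (t * u) * y)) \<partial>lborel)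
          = (\<integral>\<^sup>+y. ennreal (gamma_proc_density 1 c 1 u) * (ennreal (gamma_proc_density 1 b 1 y) * indicator A (sqrt (2 * (t * u) * y))) \<partial>lborel)"
        by (rule nn_integral_cmult[symmetric]) measurable
      also have "\<dots> = (\<integral>\<^sup>+y. ennreal (gamma_proc_density 1 c 1 u) * ennreal (gamma_proc_density 1 b 1 y) * indicator A (sqrt (2 * t * u * y)) \<partial>lborel)"
        by (intro nn_integral_cong) (simp add: mult.assoc)
      finally show ?thesis by (simp only: e)
    next
      case False
      then show ?thesis by (simp add: gpd1)
    qed
  qed
  finally show ?thesis .
qed

theorem mainTheorem15:
  fixes n :: nat and \<mu> t :: real
  assumes "n \<ge> 1" and "\<mu> > 0" and "t > 0"
  shows "compose_law (gamma_proc_law 1 \<mu> t) (bm_norm_law n)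
           = compose_law (gamma_proc_law 1 \<mu> t) (\<lambda>s. gamma_proc_law 2 (real n / 2) (2 * s))
       \<and> compose_law (gamma_proc_law 1 \<mu> t) (\<lambda>s. gamma_proc_law 2 (real n / 2) (2 * s))
           = compose_law (gamma_proc_law 1 (real n / 2) t) (\<lambda>s. gamma_proc_law 2 \<mu> (2 * s))"
proof -
  have n2: "0 < real n / 2" using assms(1) by simp
  have mu: "0 < \<mu>" and t: "0 < t" using assms by auto
  have L: "bind (gamma_proc_law 1 \<mu> t) (\<lambda>s. gamma_proc_law 2 (real n / 2) (2 * s))
      = bind (gamma_proc_law 1 \<mu> t) (\<lambda>s. gamma_proc_law 2 (real n / 2) (2 * \<bar>s\<bar>))"
    by (rule bind_junk[OF n2])
  have R: "bind (gamma_proc_law 1 (real n / 2) t) (\<lambda>s. gamma_proc_law 2 \<mu> (2 * s))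
      = bind (gamma_proc_law 1 (real n / 2) t) (\<lambda>s. gamma_proc_law 2 \<mu> (2 * \<bar>s\<bar>))"
    by (rule bind_junk[OF mu])
  have e1: "compose_law (gamma_proc_law 1 \<mu> t) (bm_norm_law n)
           = compose_law (gamma_proc_law 1 \<mu> t) (\<lambda>s. gamma_proc_law 2 (real n / 2) (2 * s))"
    unfolding compose_law_def bm_norm_law_eq[OF assms(1)] L ..
  have "bind (gamma_proc_law 1 \<mu> t) (\<lambda>s. gamma_proc_law 2 (real n / 2) (2 * \<bar>s\<bar>))
      = bind (gamma_proc_law 1 (real n / 2) t) (\<lambda>s. gamma_proc_law 2 \<mu> (2 * \<bar>s\<bar>))"
  proof (rule measure_eqI)
    have s1: "sets (bind (gamma_proc_law 1 \<mu> t) (\<lambda>s. gamma_proc_law 2 (real n / 2) (2 * \<bar>s\<bar>))) = sets borel"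
      by (rule sets_bind_measurable[OF kernel_meas[OF n2]]) auto
    have s2: "sets (bind (gamma_proc_law 1 (real n / 2) t) (\<lambda>s. gamma_proc_law 2 \<mu> (2 * \<bar>s\<bar>))) = sets borel"
      by (rule sets_bind_measurable[OF kernel_meas[OF mu]]) auto
    show "sets (bind (gamma_proc_law 1 \<mu> t) (\<lambda>s. gamma_proc_law 2 (real n / 2) (2 * \<bar>s\<bar>)))
        = sets (bind (gamma_proc_law 1 (real n / 2) t) (\<lambda>s. gamma_proc_law 2 \<mu> (2 * \<bar>s\<bar>)))"
      using s1 s2 by simp
    fix A assume "A \<in> sets (bind (gamma_proc_law 1 \<mu> t) (\<lambda>s. gamma_proc_law 2 (real n / 2) (2 * \<bar>s\<bar>)))"
    then have A[measurable]: "A \<in> sets borel" using s1 by simp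
    have "emeasure (bind (gamma_proc_law 1 (real n / 2) t) (\<lambda>s. gamma_proc_law 2 \<mu> (2 * \<bar>s\<bar>))) A
       = (\<integral>\<^sup>+u. \<integral>\<^sup>+y. ennreal (gamma_proc_density 1 (real n / 2) 1 u) * ennreal (gamma_proc_density 1 \<mu> 1 y) * indicator A (sqrt (2 * t * u * y)) \<partial>lborel \<partial>lborel)"
      by (rule mix_formula[OF n2 mu t A])
    also have "\<dots> = (\<integral>\<^sup>+y. \<integral>\<^sup>+u. ennreal (gamma_proc_density 1 (real n / 2) 1 u) * ennreal (gamma_proc_density 1 \<mu> 1 y) * indicator A (sqrt (2 * t * u * y)) \<partial>lborel \<partial>lborel)"
      by (rule lborel_pair.Fubini'[symmetric]) measurable
    also have "\<dots> = (\<integral>\<^sup>+u. \<integral>\<^sup>+y. ennreal (gamma_proc_density 1 \<mu> 1 u) * ennreal (gamma_proc_density 1 (real n / 2) 1 y) * indicator A (sqrt (2 * t * u * y)) \<partial>lborel \<partial>lborel)"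
      by (intro nn_integral_cong) (simp add: mult_ac)
    also have "\<dots> = emeasure (bind (gamma_proc_law 1 \<mu> t) (\<lambda>s. gamma_proc_law 2 (real n / 2) (2 * \<bar>s\<bar>))) A"
      by (rule mix_formula[OF mu n2 t A, symmetric])
    finally show "emeasure (bind (gamma_proc_law 1 \<mu> t) (\<lambda>s. gamma_proc_law 2 (real n / 2) (2 * \<bar>s\<bar>))) A
      = emeasure (bind (gamma_proc_law 1 (real n / 2) t) (\<lambda>s. gamma_proc_law 2 \<mu> (2 * \<bar>s\<bar>))) A" ..
  qed
  then have e2: "compose_law (gamma_proc_law 1 \<mu> t) (\<lambda>s. gamma_proc_law 2 (real n / 2) (2 * s))
           = compose_law (gamma_proc_law 1 (real n / 2) t) (\<lambda>s. gamma_proc_law 2 \<mu> (2 * s))"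
    unfolding compose_law_def L R .
  show ?thesis using e1 e2 by blast
qed


end
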